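(* Let $m\ge0$ and $k\ge1$ be integers and $n\ge0$. Then $$\lim_{q\to-1}\frac{\sum_{j=0}^{2n}q^{(2m+1)j}\begin{bmatrix} 2n\\ j\end{bmatrix}_{q^{2k}}}{(-q;q^2)_n}=(2k)^n,\qquad \lim_{q\to-1}\frac{\sum_{j=0}^{2n+1}q^{(2m+1)j}\begin{bmatrix} 2n+1\\ j\end{bmatrix}_{q^{2k}}}{(-q;q^2)_{n+1}}=(2k)^n(2m+1).$$
   Context: $(x;q)_n=\prod_{j=0}^{n-1}(1-q^jx)$. The Gaussian binomial coefficient is $\begin{bmatrix} n\\ j\end{bmatrix}_q=\frac{(q;q)_n}{(q;q)_j(q;q)_{n-j}}$ for $0\le j\le n$, a polynomial in $q$; $\begin{bmatrix} n\\ j\end{bmatrix}_{q^{2k}}$ is this with $q$ replaced by $q^{2k}$. The quotients are rational functions of $q$ and the limits are taken as $q\to-1$. *)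

theory Defs
  imports Complex_Main
begin

definition qpoch :: "real \<Rightarrow> real \<Rightarrow> nat \<Rightarrow> real" where
  "qpoch x q n = (\<Prod>j<n. 1 - q ^ j * x)"

definition gauss_binom :: "nat \<Rightarrow> nat \<Rightarrow> real \<Rightarrow> real" where
  "gauss_binom n j q = qpoch q q n / (qpoch q q j * qpoch q q (n - j))"

end

theory Submission
  imports Defs
begin


lemma Q_Suc: "qpoch p p (Suc j) = qpoch p p j * (1 - p^Suc j)"
  by (simp add: qpoch_def mult.commute)

lemma Q0[simp]: "qpoch p p 0 = 1" by (simp add: qpoch_def)

lemma pow_ne1: "(p::real) > 0 \<Longrightarrow> p \<noteq> 1 \<Longrightarrow> n > 0 \<Longrightarrow> p^n \<noteq> 1"
  using power_eq_1_iff by fastforce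

lemma Q_nz: "(p::real) > 0 \<Longrightarrow> p \<noteq> 1 \<Longrightarrow> qpoch p p j \<noteq> 0"
proof (induction j)
  case 0 then show ?case by simp
next
  case (Suc j) then show ?case using pow_ne1[of p "Suc j"] by (simp add: Q_Suc)
qed

definition gb :: "nat \<Rightarrow> nat \<Rightarrow> real \<Rightarrow> real" where
  "gb N j p = (if j \<le> N then gauss_binom N j p else 0)"

lemma gb0: "(p::real) > 0 \<Longrightarrow> p \<noteq> 1 \<Longrightarrow> gb N 0 p = 1"
  using Q_nz[of p N] by (simp add: gb_def gauss_binom_def)

lemma gbN: "(p::real) > 0 \<Longrightarrow> p \<noteq> 1 \<Longrightarrow> gb N N p = 1"
  using Q_nz[of p N] by (simp add: gb_def gauss_binom_def)

lemma gb_over: "j > N \<Longrightarrow> gb N j p = 0" by (simp add: gb_def)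

lemma alg1:
  fixes A B C X Y :: real
  assumes "A \<noteq> 0" "B \<noteq> 0" "1 - X \<noteq> 0" "1 - Y \<noteq> 0"
  shows "C*(1-X*Y)/(A*(1-Y)*(B*(1-X))) = C/(A*(1-Y)*B) + X*(C/(A*(B*(1-X))))"
proof -
  have "C/(A*(1-Y)*B) + X*(C/(A*(B*(1-X)))) = (C*(1-X) + X*C*(1-Y))/(A*(1-Y)*(B*(1-X)))"
    using assms by (simp add: add_divide_distrib)
  also have "C*(1-X) + X*C*(1-Y) = C*(1-X*Y)" by (simp add: algebra_simps)
  finally show ?thesis by simp
qed

lemma pascal:
  assumes p: "(p::real) > 0" "p \<noteq> 1"
  shows "gb (Suc N) (Suc j) p = gb N (Suc j) p + p^(N-j) * gb N j p"
proof (cases "j < N")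
  case True
  then obtain r where N: "N = j + Suc r" by (metis add_Suc_right less_iff_Suc_add add.commute)
  define A where "A = qpoch p p j"
  define B where "B = qpoch p p r"
  define C where "C = qpoch p p N"
  have n1: "A \<noteq> 0" "B \<noteq> 0" using Q_nz p unfolding A_def B_def by auto
  have n2: "1 - p^Suc j \<noteq> 0" "1 - p^Suc r \<noteq> 0"
    using pow_ne1[OF p, of "Suc j"] pow_ne1[OF p, of "Suc r"] by auto
  have pw: "p^Suc N = p^Suc r * p^Suc j" using N by (simp add: power_add[symmetric] add_ac)
  have g1: "gb (Suc N) (Suc j) p = qpoch p p (Suc N) / (qpoch p p (Suc j) * qpoch p p (Suc r))"
    using N by (simp add: gb_def gauss_binom_def)
  have g2: "gb N (Suc j) p = qpoch p p N / (qpoch p p (Suc j) * qpoch p p r)"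
    using N by (simp add: gb_def gauss_binom_def)
  have g3: "gb N j p = qpoch p p N / (qpoch p p j * qpoch p p (Suc r))"
    using N by (simp add: gb_def gauss_binom_def)
  have "gb (Suc N) (Suc j) p = C*(1-p^Suc r * p^Suc j)/(A*(1-p^Suc j)*(B*(1-p^Suc r)))"
    unfolding g1 A_def B_def C_def Q_Suc[of p N] Q_Suc[of p j] Q_Suc[of p r] pw by simp
  also have "\<dots> = C/(A*(1-p^Suc j)*B) + p^Suc r*(C/(A*(B*(1-p^Suc r))))"
    by (rule alg1[OF n1 n2(2) n2(1)])
  also have "\<dots> = gb N (Suc j) p + p^(N-j) * gb N j p"
    unfolding g2 g3 A_def B_def C_def Q_Suc[of p j] Q_Suc[of p r] using N by simp
  finally show ?thesis .
next
  case False
  then show ?thesis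
  proof (cases "j = N")
    case True then show ?thesis using gbN[OF p] by (simp add: gb_over)
  qed (simp add: gb_over)
qed

lemma alg2:
  fixes A B C X Y :: real
  assumes "A \<noteq> 0" "B \<noteq> 0" "1 - X \<noteq> 0"
  shows "(1 - X) * (C*(1-Y)/(A*(B*(1-X)))) = (1-Y) * (C/(A*B))"
  using assms by (simp add: field_simps)

lemma absorb:
  assumes p: "(p::real) > 0" "p \<noteq> 1"
  shows "(1 - p^(Suc N - j)) * gb (Suc N) j p = (1 - p^Suc N) * gb N j p"
proof (cases "j \<le> N")
  case True
  then obtain r where N: "N = j + r" using le_Suc_ex by blast
  have n1: "qpoch p p j \<noteq> 0" "qpoch p p r \<noteq> 0"
    using Q_nz p by auto
  have n2: "1 - p^Suc r \<noteq> 0" using pow_ne1[OF p, of "Suc r"] by auto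
  have g1: "gb (Suc N) j p = qpoch p p (Suc N) / (qpoch p p j * qpoch p p (Suc r))"
    using N by (simp add: gb_def gauss_binom_def Suc_diff_le)
  have g2: "gb N j p = qpoch p p N / (qpoch p p j * qpoch p p r)"
    using N by (simp add: gb_def gauss_binom_def)
  have s: "Suc N - j = Suc r" using N by simp
  show ?thesis
    unfolding g1 g2 s Q_Suc[of p N] Q_Suc[of p r] by (rule alg2[OF n1 n2])
next
  case False
  then show ?thesis
    by (cases "j = Suc N") (simp_all add: gb_over)
qed

lemma lin: "(1 - (a::real)) * g = c \<Longrightarrow> a * g = g - c"
  by (simp add: algebra_simps)

lemma rec:
  assumes p: "(p::real) > 0" "p \<noteq> 1"
  shows "(\<Sum>j\<le>N+2. gb (N+2) j p * z^j) =
     (1+z)*(\<Sum>j\<le>N+1. gb (N+1) j p * z^j) - z*(1-p^(N+1))*(\<Sum>j\<le>N. gb N j p * z^j)"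
proof -
  have tm: "gb (N+2) (Suc j) p * z^Suc j = gb (N+1) (Suc j) p * z^Suc j + z * (gb (N+1) j p * z^j)
      - z*(1-p^(N+1)) * (gb N j p * z^j)" for j
  proof -
    have h1: "gb (N+2) (Suc j) p = gb (N+1) (Suc j) p + p^(N+1-j) * gb (N+1) j p"
      using pascal[OF p, of "N+1" j] by simp
    have h2: "p^(N+1-j) * gb (N+1) j p = gb (N+1) j p - (1-p^(N+1)) * gb N j p"
      using lin[OF absorb[OF p, of N j]] by simp
    have h: "gb (N+2) (Suc j) p = gb (N+1) (Suc j) p + gb (N+1) j p - (1-p^(N+1)) * gb N j p"
      using h1 h2 by simp
    show ?thesis unfolding h by (simp add: algebra_simps)
  qed
  have S0: "(\<Sum>j\<le>N+2. gb (N+2) j p * z^j) = gb (N+2) 0 p + (\<Sum>j\<le>N+1. gb (N+2) (Suc j) p * z^Suc j)"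
    using sum.atMost_Suc_shift[of "\<lambda>j. gb (N+2) j p * z^j" "N+1"] by (simp add: numeral_2_eq_2)
  have S1: "(\<Sum>j\<le>N+1. gb (N+2) (Suc j) p * z^Suc j) =
     ((\<Sum>j\<le>N+1. gb (N+1) (Suc j) p * z^Suc j) + (\<Sum>j\<le>N+1. z * (gb (N+1) j p * z^j)))
      - (\<Sum>j\<le>N+1. z*(1-p^(N+1)) * (gb N j p * z^j))"
    by (simp only: tm sum.distrib sum_subtractf)
  have S2: "(\<Sum>j\<le>N+1. z * (gb (N+1) j p * z^j)) = z * (\<Sum>j\<le>N+1. gb (N+1) j p * z^j)"
    by (rule sum_distrib_left[symmetric])
  have S3: "(\<Sum>j\<le>N+1. z*(1-p^(N+1)) * (gb N j p * z^j)) = z*(1-p^(N+1)) * (\<Sum>j\<le>N+1. gb N j p * z^j)"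
    by (rule sum_distrib_left[symmetric])
  have S4: "gb (N+2) 0 p + (\<Sum>j\<le>N+1. gb (N+1) (Suc j) p * z^Suc j) = (\<Sum>j\<le>N+1. gb (N+1) j p * z^j)"
  proof -
    have "(\<Sum>j\<le>N+1. gb (N+1) (Suc j) p * z^Suc j) = (\<Sum>j\<le>N. gb (N+1) (Suc j) p * z^Suc j)"
      by (simp add: gb_over)
    moreover have "(\<Sum>j\<le>N+1. gb (N+1) j p * z^j) = gb (N+1) 0 p + (\<Sum>j\<le>N. gb (N+1) (Suc j) p * z^Suc j)"
      using sum.atMost_Suc_shift[of "\<lambda>j. gb (N+1) j p * z^j" "N"] by simp
    ultimately show ?thesis by (simp add: gb0[OF p])
  qed
  have S5: "(\<Sum>j\<le>N+1. gb N j p * z^j) = (\<Sum>j\<le>N. gb N j p * z^j)"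
    by (simp add: gb_over)
  have S6: "(1+z)*(\<Sum>j\<le>N+1. gb (N+1) j p * z^j) = (\<Sum>j\<le>N+1. gb (N+1) j p * z^j) + z*(\<Sum>j\<le>N+1. gb (N+1) j p * z^j)"
    by (simp add: algebra_simps)
  have S7: "z*(1-p^(N+1)) * (\<Sum>j\<le>N+1. gb N j p * z^j) = z*(1-p^(N+1)) * (\<Sum>j\<le>N. gb N j p * z^j)"
    by (simp only: S5)
  show ?thesis using S0 S1 S2 S3 S4 S7 S6 by linarith
qed



lemma ev_ne: "eventually (\<lambda>q::real. q \<noteq> -1) (at (-1))"
  by (simp add: eventually_at_filter)

lemma ev_good: "eventually (\<lambda>q::real. q \<noteq> -1 \<and> q \<noteq> 0 \<and> q\<^sup>2 \<noteq> 1) (at (-1))"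
proof -
  have "eventually (\<lambda>q. q \<in> {-3/2<..<-1/2::real}) (nhds (-1))"
    by (rule eventually_nhds_in_open) auto
  then show ?thesis
    unfolding eventually_at_filter by (rule eventually_mono) (auto simp: power2_eq_1_iff)
qed

lemma lim_odd_ratio:
  assumes "odd b"
  shows "((\<lambda>q::real. (1+q^b)/(1+q)) \<longlongrightarrow> real b) (at (-1))"
proof -
  have eq: "(1+q^b)/(1+q) = (\<Sum>i<b. (-q)^i)" if "q \<noteq> -1" for q :: real
  proof -
    have "1 - (-q)^b = (1 - (-q)) * (\<Sum>i<b. (-q)^i)" by (rule one_diff_power_eq)
    then have "1 + q^b = (1+q) * (\<Sum>i<b. (-q)^i)" using assms by (simp add: power_minus_odd)
    moreover have "1 + q \<noteq> 0" using that by linarith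
    ultimately show ?thesis by simp
  qed
  have "((\<lambda>q::real. (\<Sum>i<b. (-q)^i)) \<longlongrightarrow> (\<Sum>i<b. (-(-1::real))^i)) (at (-1))"
    by (intro tendsto_intros)
  then have "((\<lambda>q::real. (\<Sum>i<b. (-q)^i)) \<longlongrightarrow> real b) (at (-1))" by simp
  then show ?thesis
    by (rule Lim_transform_eventually) (rule eventually_mono[OF ev_ne], simp add: eq)
qed

lemma lim_even_ratio:
  shows "((\<lambda>q::real. (1-q^(2*M))/(1+q)) \<longlongrightarrow> 2 * real M) (at (-1))"
proof -
  have eq: "(1-q^(2*M))/(1+q) = (1-q) * (\<Sum>i<M. (q^2)^i)" if "q \<noteq> -1" for q :: real
  proof -
    have "1 - (q^2)^M = (1 - q^2) * (\<Sum>i<M. (q^2)^i)" by (rule one_diff_power_eq)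
    then have "1 - q^(2*M) = (1+q) * ((1 - q) * (\<Sum>i<M. (q^2)^i))"
      by (simp add: power_mult algebra_simps power2_eq_square)
    moreover have "1 + q \<noteq> 0" using that by linarith
    ultimately show ?thesis by simp
  qed
  have "((\<lambda>q::real. (1-q) * (\<Sum>i<M. (q^2)^i)) \<longlongrightarrow> (1-(-1)) * (\<Sum>i<M. ((-1::real)^2)^i)) (at (-1))"
    by (intro tendsto_intros)
  then have "((\<lambda>q::real. (1-q) * (\<Sum>i<M. (q^2)^i)) \<longlongrightarrow> 2 * real M) (at (-1))" by simp
  then show ?thesis
    by (rule Lim_transform_eventually) (rule eventually_mono[OF ev_ne], simp add: eq)
qed

lemma cancel_div: "(c::real) \<noteq> 0 \<Longrightarrow> a/c/(d/c) = a/d"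
  by (cases "d = 0") simp_all

lemma lim_r1:
  assumes "odd a" "odd b"
  shows "((\<lambda>q::real. (1+q^a)/(1+q^b)) \<longlongrightarrow> real a / real b) (at (-1))"
proof -
  have "real b \<noteq> 0" using assms by (cases b) auto
  from tendsto_divide[OF lim_odd_ratio[OF assms(1)] lim_odd_ratio[OF assms(2)] this]
  have "((\<lambda>q::real. ((1+q^a)/(1+q)) / ((1+q^b)/(1+q))) \<longlongrightarrow> real a / real b) (at (-1))" .
  moreover have "eventually (\<lambda>q::real. ((1+q^a)/(1+q)) / ((1+q^b)/(1+q)) = (1+q^a)/(1+q^b)) (at (-1))"
  proof (rule eventually_mono[OF ev_ne])
    fix q :: real assume "q \<noteq> -1"
    then have "1 + q \<noteq> 0" by linarith
    then show "((1+q^a)/(1+q)) / ((1+q^b)/(1+q)) = (1+q^a)/(1+q^b)" by (rule cancel_div)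
  qed
  ultimately show ?thesis by (rule Lim_transform_eventually)
qed

lemma lim_r2:
  assumes "odd b"
  shows "((\<lambda>q::real. (1-(q^(2*k))^N)/(1+q^b)) \<longlongrightarrow> 2 * real (k*N) / real b) (at (-1))"
proof -
  have "real b \<noteq> 0" using assms by (cases b) auto
  from tendsto_divide[OF lim_even_ratio[of "k*N"] lim_odd_ratio[OF assms] this]
  have "((\<lambda>q::real. ((1-q^(2*(k*N)))/(1+q)) / ((1+q^b)/(1+q))) \<longlongrightarrow> 2 * real (k*N) / real b) (at (-1))" .
  moreover have "eventually (\<lambda>q::real. ((1-q^(2*(k*N)))/(1+q)) / ((1+q^b)/(1+q)) = (1-(q^(2*k))^N)/(1+q^b)) (at (-1))"
  proof (rule eventually_mono[OF ev_ne])
    fix q :: real assume "q \<noteq> -1"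
    then have c: "1 + q \<noteq> 0" by linarith
    have pw: "(q^(2*k))^N = q^(2*(k*N))" by (simp only: power_mult[symmetric] mult.assoc)
    show "((1-q^(2*(k*N)))/(1+q)) / ((1+q^b)/(1+q)) = (1-(q^(2*k))^N)/(1+q^b)"
      by (simp only: pw cancel_div[OF c])
  qed
  ultimately show ?thesis by (rule Lim_transform_eventually)
qed

lemma D_Suc: "qpoch (-q) (q^2) (Suc n) = qpoch (-q) (q^2) n * (1 + q^(2*n+1))"
  by (simp add: qpoch_def power_mult[symmetric])



context
  fixes m k :: nat
  assumes k: "k \<ge> 1"
begin

definition H :: "nat \<Rightarrow> real \<Rightarrow> real" where
  "H N q = (\<Sum>j\<le>N. gb N j (q^(2*k)) * (q^(2*m+1))^j)"

definition Rev :: "nat \<Rightarrow> real \<Rightarrow> real" where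
  "Rev n q = H (2*n) q / qpoch (-q) (q^2) n"

definition Rod :: "nat \<Rightarrow> real \<Rightarrow> real" where
  "Rod n q = H (2*n+1) q / qpoch (-q) (q^2) (Suc n)"

lemma good_p: "(q::real) \<noteq> 0 \<Longrightarrow> q\<^sup>2 \<noteq> 1 \<Longrightarrow> q^(2*k) > 0 \<and> q^(2*k) \<noteq> 1"
proof -
  assume q: "q \<noteq> 0" "q\<^sup>2 \<noteq> 1"
  have "q^(2*k) = (q^2)^k" by (rule power_mult)
  moreover have "(q^2)^k \<noteq> 1" using pow_ne1[of "q^2" k] q k by simp
  ultimately show ?thesis using q by simp
qed

lemma ev_rec: "eventually (\<lambda>q. H (N+2) q = (1 + q^(2*m+1)) * H (N+1) q
        - q^(2*m+1) * (1 - (q^(2*k))^(N+1)) * H N q) (at (-1))"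
  using ev_good
proof (rule eventually_mono)
  fix q :: real assume "q \<noteq> -1 \<and> q \<noteq> 0 \<and> q\<^sup>2 \<noteq> 1"
  then have p: "q^(2*k) > 0" "q^(2*k) \<noteq> 1" using good_p by auto
  show "H (N+2) q = (1 + q^(2*m+1)) * H (N+1) q - q^(2*m+1) * (1 - (q^(2*k))^(N+1)) * H N q"
    unfolding H_def by (rule rec[OF p])
qed

lemma alg3: "((a::real)*Ho - b*He)/(Dn*c) = a*(Ho/(Dn*c)) - b/c*(He/Dn)"
  by (simp add: diff_divide_distrib)

lemma alg4: "((a::real)*He - b*Ho)/(D1*c) = a/c*(He/D1) - b/c*(Ho/D1)"
  by (simp add: diff_divide_distrib mult.commute)

lemma alg5:
  fixes d e A K X :: real
  assumes d: "d = 1 + e" "d \<noteq> 0"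
  shows "A/d*(K*X) - (-1)*(K*e/d)*(X*A) = K*X*A"
proof -
  have "A/d*(K*X) - (-1)*(K*e/d)*(X*A) = (A*K*X + K*e*X*A)/d"
    by (simp add: add_divide_distrib)
  also have "A*K*X + K*e*X*A = (K*X*A)*d" by (simp add: d(1) algebra_simps)
  finally show ?thesis using d(2) by simp
qed

lemma sum_eq: "(\<Sum>j=0..N. q^((2*m+1)*j) * gauss_binom N j (q^(2*k))) = H N q"
  unfolding H_def atLeast0AtMost
proof (rule sum.cong[OF refl])
  fix j assume "j \<in> {..N}"
  then have j: "j \<le> N" by simp
  show "q^((2*m+1)*j) * gauss_binom N j (q^(2*k)) = gb N j (q^(2*k)) * (q^(2*m+1))^j"
    unfolding gb_def if_P[OF j] power_mult[of q "2*m+1" j] by (rule mult.commute)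
qed

lemma main: "(Rev n \<longlongrightarrow> (2*real k)^n) (at (-1)) \<and> (Rod n \<longlongrightarrow> (2*real k)^n * (2*real m+1)) (at (-1))"
proof (induction n)
  case 0
  have e0: "Rev 0 = (\<lambda>q. 1)"
    by (auto simp: Rev_def H_def gb_def gauss_binom_def qpoch_def)
  have "eventually (\<lambda>q. (1 + q^(2*m+1))/(1+q) = Rod 0 q) (at (-1))"
    using ev_good
  proof (rule eventually_mono)
    fix q :: real assume "q \<noteq> -1 \<and> q \<noteq> 0 \<and> q\<^sup>2 \<noteq> 1"
    then have p: "q^(2*k) > 0" "q^(2*k) \<noteq> 1" using good_p by auto
    show "(1 + q^(2*m+1))/(1+q) = Rod 0 q"
      unfolding Rod_def H_def using gb0[OF p, of 1] gbN[OF p, of 1]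
      by (simp add: qpoch_def)
  qed
  moreover have "((\<lambda>q::real. (1+q^(2*m+1))/(1+q)) \<longlongrightarrow> real (2*m+1)) (at (-1))"
    by (rule lim_odd_ratio) simp
  ultimately have "(Rod 0 \<longlongrightarrow> real (2*m+1)) (at (-1))"
    by (rule Lim_transform_eventually[rotated])
  moreover have "real (2*m+1) = 2*real m + 1" by simp
  ultimately show ?case by (simp add: e0 add.commute)
next
  case (Suc n)
  have IHe: "(Rev n \<longlongrightarrow> (2*real k)^n) (at (-1))" and IHo: "(Rod n \<longlongrightarrow> (2*real k)^n * (2*real m+1)) (at (-1))"
    using Suc by auto
  have ee: "eventually (\<lambda>q. (1 + q^(2*m+1)) * Rod n q - q^(2*m+1) * ((1 - (q^(2*k))^(2*n+1))/(1+q^(2*n+1))) * Rev n q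
      = Rev (Suc n) q) (at (-1))"
    using ev_rec[of "2*n"]
  proof (rule eventually_mono)
    fix q :: real
    assume r: "H (2*n+2) q = (1 + q^(2*m+1)) * H (2*n+1) q - q^(2*m+1) * (1 - (q^(2*k))^(2*n+1)) * H (2*n) q"
    have "Rev (Suc n) q = ((1 + q^(2*m+1)) * H (2*n+1) q - (q^(2*m+1) * (1 - (q^(2*k))^(2*n+1))) * H (2*n) q)
        / (qpoch (-q) (q^2) n * (1 + q^(2*n+1)))"
      unfolding Rev_def D_Suc using r by (simp add: mult.assoc)
    also have "\<dots> = (1 + q^(2*m+1)) * Rod n q - q^(2*m+1) * ((1 - (q^(2*k))^(2*n+1))/(1+q^(2*n+1))) * Rev n q"
      unfolding alg3 Rod_def Rev_def D_Suc by simp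
    finally show "(1 + q^(2*m+1)) * Rod n q - q^(2*m+1) * ((1 - (q^(2*k))^(2*n+1))/(1+q^(2*n+1))) * Rev n q
      = Rev (Suc n) q" ..
  qed
  have lz: "((\<lambda>q::real. q^(2*m+1)) \<longlongrightarrow> -1) (at (-1))"
  proof -
    have "((\<lambda>q::real. q^(2*m+1)) \<longlongrightarrow> (-1)^(2*m+1)) (at (-1))" by (intro tendsto_intros)
    then show ?thesis by simp
  qed
  have l1: "((\<lambda>q::real. 1 + q^(2*m+1)) \<longlongrightarrow> 0) (at (-1))"
    using tendsto_add[OF tendsto_const[of 1] lz] by simp
  have lr: "((\<lambda>q::real. (1 - (q^(2*k))^(2*n+1))/(1+q^(2*n+1))) \<longlongrightarrow> 2 * real (k*(2*n+1)) / real (2*n+1)) (at (-1))"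
    by (rule lim_r2) simp
  have "((\<lambda>q. (1 + q^(2*m+1)) * Rod n q - q^(2*m+1) * ((1 - (q^(2*k))^(2*n+1))/(1+q^(2*n+1))) * Rev n q)
     \<longlongrightarrow> 0 * ((2*real k)^n * (2*real m+1)) - (-1) * (2 * real (k*(2*n+1)) / real (2*n+1)) * (2*real k)^n) (at (-1))"
    by (intro tendsto_intros l1 lz lr IHe IHo)
  moreover have eqE: "0 * ((2*real k)^n * (2*real m+1)) - (-1) * (2 * real (k*(2*n+1)) / real (2*n+1)) * (2*real k)^n
      = (2*real k)^Suc n"
    by (simp add: field_simps)
  ultimately have LE: "(Rev (Suc n) \<longlongrightarrow> (2*real k)^Suc n) (at (-1))"
    using ee by (simp only:) (rule Lim_transform_eventually)
  have eo: "eventually (\<lambda>q. (1 + q^(2*m+1))/(1+q^(2*n+3)) * Rev (Suc n) q - q^(2*m+1) * ((1 - (q^(2*k))^(2*n+2))/(1+q^(2*n+3))) * Rod n q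
      = Rod (Suc n) q) (at (-1))"
    using ev_rec[of "2*n+1"]
  proof (rule eventually_mono)
    fix q :: real
    assume r: "H (2*n+1+2) q = (1 + q^(2*m+1)) * H (2*n+1+1) q - q^(2*m+1) * (1 - (q^(2*k))^(2*n+1+1)) * H (2*n+1) q"
    have "Rod (Suc n) q = ((1 + q^(2*m+1)) * H (2*Suc n) q - (q^(2*m+1) * (1 - (q^(2*k))^(2*n+2))) * H (2*n+1) q)
        / (qpoch (-q) (q^2) (Suc n) * (1 + q^(2*n+3)))"
      unfolding Rod_def D_Suc[of q "Suc n"] using r by (simp add: mult.assoc numeral_3_eq_3 numeral_2_eq_2)
    also have "\<dots> = (1 + q^(2*m+1))/(1+q^(2*n+3)) * Rev (Suc n) q - q^(2*m+1) * ((1 - (q^(2*k))^(2*n+2))/(1+q^(2*n+3))) * Rod n q"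
      unfolding alg4 Rod_def Rev_def by simp
    finally show "(1 + q^(2*m+1))/(1+q^(2*n+3)) * Rev (Suc n) q - q^(2*m+1) * ((1 - (q^(2*k))^(2*n+2))/(1+q^(2*n+3))) * Rod n q
      = Rod (Suc n) q" ..
  qed
  have la: "((\<lambda>q::real. (1 + q^(2*m+1))/(1+q^(2*n+3))) \<longlongrightarrow> real (2*m+1) / real (2*n+3)) (at (-1))"
    by (rule lim_r1) simp_all
  have lb: "((\<lambda>q::real. (1 - (q^(2*k))^(2*n+2))/(1+q^(2*n+3))) \<longlongrightarrow> 2 * real (k*(2*n+2)) / real (2*n+3)) (at (-1))"
    by (rule lim_r2) simp
  have "((\<lambda>q. (1 + q^(2*m+1))/(1+q^(2*n+3)) * Rev (Suc n) q - q^(2*m+1) * ((1 - (q^(2*k))^(2*n+2))/(1+q^(2*n+3))) * Rod n q)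
     \<longlongrightarrow> real (2*m+1) / real (2*n+3) * (2*real k)^Suc n - (-1) * (2 * real (k*(2*n+2)) / real (2*n+3)) * ((2*real k)^n * (2*real m+1))) (at (-1))"
    by (intro tendsto_intros la lz lb LE IHo)
  moreover have "real (2*m+1) / real (2*n+3) * (2*real k)^Suc n - (-1) * (2 * real (k*(2*n+2)) / real (2*n+3)) * ((2*real k)^n * (2*real m+1))
      = (2*real k)^Suc n * (2*real m+1)"
  proof -
    have d: "real (2*n+3) = 1 + (2*real n + 2)" "real (2*n+3) \<noteq> 0" by simp_all
    have "real (2*m+1) / real (2*n+3) * ((2*real k) * (2*real k)^n) - (-1) * ((2*real k) * (2*real n + 2) / real (2*n+3)) * ((2*real k)^n * real (2*m+1))
        = (2*real k) * (2*real k)^n * real (2*m+1)"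
      by (rule alg5[OF d])
    then show ?thesis by (simp add: algebra_simps)
  qed
  ultimately have LO: "(Rod (Suc n) \<longlongrightarrow> (2*real k)^Suc n * (2*real m+1)) (at (-1))"
    using eo by (simp only:) (rule Lim_transform_eventually)
  show ?case using LE LO by simp
qed

end


theorem corollary2p4:
  fixes m k n :: nat
  assumes "k \<ge> 1"
  shows "((\<lambda>q::real. (\<Sum>j=0..2*n. q ^ ((2*m+1)*j) * gauss_binom (2*n) j (q ^ (2*k)))
                      / qpoch (-q) (q^2) n) \<longlongrightarrow> (2 * real k) ^ n) (at (-1))
     \<and> ((\<lambda>q::real. (\<Sum>j=0..2*n+1. q ^ ((2*m+1)*j) * gauss_binom (2*n+1) j (q ^ (2*k)))
                      / qpoch (-q) (q^2) (n+1)) \<longlongrightarrow> (2 * real k) ^ n * (2 * real m + 1)) (at (-1))"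
proof -
  have e1: "(\<lambda>q::real. (\<Sum>j=0..2*n. q ^ ((2*m+1)*j) * gauss_binom (2*n) j (q ^ (2*k)))
                      / qpoch (-q) (q^2) n) = Rev m k n"
    unfolding sum_eq[OF assms] by (rule ext) (simp add: Rev_def[OF assms])
  have e2: "(\<lambda>q::real. (\<Sum>j=0..2*n+1. q ^ ((2*m+1)*j) * gauss_binom (2*n+1) j (q ^ (2*k)))
                      / qpoch (-q) (q^2) (n+1)) = Rod m k n"
    unfolding sum_eq[OF assms] by (rule ext) (simp add: Rod_def[OF assms])
  show ?thesis unfolding e1 e2 by (rule main[OF assms])
qed

end
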